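(* Under the standing assumptions and definitions in the context, let $\mathbf{x}^{(k)}\in\Gamma$ and let $\mathbf{x}^{(k+1)}=\arg\min_{\mathbf{x}\in\mathcal{F}(\mathbf{x}^{(k)})}J(\mathbf{x})$. Then $\nabla J(\mathbf{x}^{(k+1)})\cdot(\mathbf{x}^{(k)}-\mathbf{x}^{(k+1)})\ge0$. Moreover, if $J(\mathbf{x}^{(k+1)})=J(\mathbf{x}^{(k)})$, then $\mathbf{x}^{(k+1)}=\mathbf{x}^{(k)}$.
   Context: Problem: minimize $J(\mathbf{x})$ over $\mathbf{x}\in\Gamma\subset\mathbb{R}^n$, where (i) $J:\mathbb{R}^n\to\mathbb{R}^+$ is smooth and strictly convex; (ii) $\Gamma$ is connected and closed with piecewise smooth, non-self-intersecting boundary, and every point of $\Gamma$ lies in some $n$-dimensional convex polytope contained in $\Gamma$. Semi-convex decomposition: $\Gamma=\bigcap_{i=1}^N\Gamma_i$, $\Gamma_i=\{\mathbf{x}:\phi_i(\mathbf{x})\ge 0\}$, $\partial\Gamma_i=\{\mathbf{x}:\phi_i(\mathbf{x})=0\}$, where each $\phi_i:\mathbb{R}^n\to\mathbb{R}$ is continuous, piecewise smooth and semi-convex: there is a positive semidefinite $H_i^*$ such that $\mathbf{x}\mapsto\phi_i(\mathbf{x})+\frac12(\mathbf{x}-\mathbf{x}_0)^TH_i^*(\mathbf{x}-\mathbf{x}_0)$ is convex for every $\mathbf{x}_0$. One-sided directional derivative: $\partial_v\phi_i(\mathbf{x})=\lim_{a\to0^+}(\phi_i(\mathbf{x}+av)-\phi_i(\mathbf{x}))/a$.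 Sub-differential: $D\phi_i(\mathbf{x})=\{d\in\mathbb{R}^n: d\cdot v\le\partial_v\phi_i(\mathbf{x})\ \forall v\in\mathbb{R}^n\}$. It is assumed that: (1) $D\phi_i(\mathbf{x})\neq\{0\}$ for all $\mathbf{x}$; (2) $0\notin D\phi_i(\mathbf{x})$ if $\mathbf{x}\in\partial\Gamma_i$; (3) for any $\mathbf{x}$ with $I:=\{i:\phi_i(\mathbf{x})=0\}\ne\emptyset$ there is $v$ with $\partial_v\phi_i(\mathbf{x})<0$ for all $i\in I$. Optimal sub-gradients at a reference $\mathbf{x}^r$: a unit vector $v$ is a feasible search direction if for every $i$: $\phi_i(\mathbf{x}^r)>0$; or $\phi_i(\mathbf{x}^r)=0$ and some $d\in D\phi_i(\mathbf{x}^r)$ has $v\cdot d\ge0$; or $\phi_i(\mathbf{x}^r)<0$ and some $d\in D\phi_i(\mathbf{x}^r)$ has $v\cdot d>0$. Let $C(\mathbf{x}^r)$ be the set of these, and $v^*=\arg\min_{v\in C(\mathbf{x}^r)}\nabla J(\mathbf{x}^r)\cdot v$ (ties broken lexicographically). Let $DF_i=D\phi_i(\mathbf{x}^r)$ if $\phi_i(\mathbf{x}^r)>0$, $DF_i=\{d\in D\phi_i(\mathbf{x}^r):d\cdot v^*\ge0\}$ if $\phi_i(\mathbf{x}^r)=0$, $DF_i=\{d\in D\phi_i(\mathbf{x}^r):d\cdot v^*>0\}$ if $\phi_i(\mathbf{x}^r)<0$, and $\hat\nabla\phi_i(\mathbf{x}^r)=\arg\min_{d\in DF_i}\nabla J(\mathbf{x}^r)\cdot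 d/\|d\|$ (with $d/\|d\|:=0$ if $d=0$). Convex feasible set: $\mathcal{F}_i(\mathbf{x}^r)=\Gamma_i$ if $\phi_i$ is concave; $\mathcal{F}_i(\mathbf{x}^r)=\{\mathbf{x}:\phi_i(\mathbf{x}^r)+\hat\nabla\phi_i(\mathbf{x}^r)(\mathbf{x}-\mathbf{x}^r)\ge0\}$ if $\phi_i$ is convex; $\mathcal{F}_i(\mathbf{x}^r)=\{\mathbf{x}:\phi_i(\mathbf{x}^r)+\hat\nabla\phi_i(\mathbf{x}^r)(\mathbf{x}-\mathbf{x}^r)\ge\frac12(\mathbf{x}-\mathbf{x}^r)^TH_i^*(\mathbf{x}-\mathbf{x}^r)\}$ otherwise; $\mathcal{F}(\mathbf{x}^r)=\bigcap_{i=1}^N\mathcal{F}_i(\mathbf{x}^r)$. *)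

theory Defs
  imports "HOL-Analysis.Analysis"
begin

text \<open>Vectors live in real^'n; the index type is linearly ordered so that the
lexicographic tie-breaking rule makes sense (coordinates 1 < 2 < ... < n).\<close>

coinductive smooth_fun :: "(real^'n \<Rightarrow> real) \<Rightarrow> bool" where
  "(\<forall>x. f differentiable (at x)) \<Longrightarrow>
   (\<forall>i. smooth_fun (\<lambda>x. frechet_derivative f (at x) (axis i 1))) \<Longrightarrow> smooth_fun f"

definition grad :: "(real^'n \<Rightarrow> real) \<Rightarrow> real^'n \<Rightarrow> real^'n" where
  "grad f x = (\<chi> i. frechet_derivative f (at x) (axis i 1))"

definition strict_convex_on :: "'a::real_vector set \<Rightarrow> ('a \<Rightarrow> real) \<Rightarrow> bool" where
  "strict_convex_on S f \<longleftrightarrow>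
     (\<forall>x\<in>S. \<forall>y\<in>S. x \<noteq> y \<longrightarrow> (\<forall>u::real. 0 < u \<and> u < 1 \<longrightarrow>
        f ((1 - u) *\<^sub>R x + u *\<^sub>R y) < (1 - u) * f x + u * f y))"

definition dirderiv :: "(real^'n \<Rightarrow> real) \<Rightarrow> real^'n \<Rightarrow> real^'n \<Rightarrow> real" where
  "dirderiv \<phi> x v = Lim (at_right 0) (\<lambda>a. (\<phi> (x + a *\<^sub>R v) - \<phi> x) / a)"

definition subdiff :: "(real^'n \<Rightarrow> real) \<Rightarrow> real^'n \<Rightarrow> (real^'n) set" where
  "subdiff \<phi> x = {d. \<forall>v. d \<bullet> v \<le> dirderiv \<phi> x v}"

definition psd :: "real^'n^'n \<Rightarrow> bool" where
  "psd H \<longleftrightarrow> transpose H = H \<and> (\<forall>u. 0 \<le> u \<bullet> (H *v u))"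

definition semi_convex_with :: "(real^'n \<Rightarrow> real) \<Rightarrow> real^'n^'n \<Rightarrow> bool" where
  "semi_convex_with \<phi> H \<longleftrightarrow> psd H \<and>
     (\<forall>x0. convex_on UNIV (\<lambda>x. \<phi> x + (1/2) * ((x - x0) \<bullet> (H *v (x - x0)))))"

definition lex_less :: "(real^('n::{finite,linorder})) \<Rightarrow> real^('n::{finite,linorder}) \<Rightarrow> bool" where
  "lex_less u v \<longleftrightarrow> (\<exists>i. u $ i < v $ i \<and> (\<forall>j. j < i \<longrightarrow> u $ j = v $ j))"

definition feas_dirs :: "nat \<Rightarrow> (nat \<Rightarrow> real^('n::{finite,linorder}) \<Rightarrow> real) \<Rightarrow> real^('n::{finite,linorder}) \<Rightarrow> (real^('n::{finite,linorder})) set" where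
  "feas_dirs N \<phi> xr = {v. norm v = 1 \<and> (\<forall>i\<in>{1..N}.
       \<phi> i xr > 0
     \<or> (\<phi> i xr = 0 \<and> (\<exists>d\<in>subdiff (\<phi> i) xr. v \<bullet> d \<ge> 0))
     \<or> (\<phi> i xr < 0 \<and> (\<exists>d\<in>subdiff (\<phi> i) xr. v \<bullet> d > 0)))}"

definition opt_dir :: "nat \<Rightarrow> (nat \<Rightarrow> real^('n::{finite,linorder}) \<Rightarrow> real) \<Rightarrow> (real^('n::{finite,linorder}) \<Rightarrow> real)
     \<Rightarrow> real^('n::{finite,linorder}) \<Rightarrow> real^('n::{finite,linorder})" where
  "opt_dir N \<phi> J xr =
     (let C = feas_dirs N \<phi> xr;
          M = {v\<in>C. \<forall>w\<in>C. grad J xr \<bullet> v \<le> grad J xr \<bullet> w}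
      in THE v. v \<in> M \<and> (\<forall>w\<in>M. w \<noteq> v \<longrightarrow> lex_less v w))"

definition DF :: "nat \<Rightarrow> (nat \<Rightarrow> real^('n::{finite,linorder}) \<Rightarrow> real) \<Rightarrow> (real^('n::{finite,linorder}) \<Rightarrow> real)
     \<Rightarrow> real^('n::{finite,linorder}) \<Rightarrow> nat \<Rightarrow> (real^('n::{finite,linorder})) set" where
  "DF N \<phi> J xr i =
     (let vs = opt_dir N \<phi> J xr in
      if \<phi> i xr > 0 then subdiff (\<phi> i) xr
      else if \<phi> i xr = 0 then {d\<in>subdiff (\<phi> i) xr. d \<bullet> vs \<ge> 0}
      else {d\<in>subdiff (\<phi> i) xr. d \<bullet> vs > 0})"

text \<open>Optimal sub-gradient; d/|d| is sgn d (with sgn 0 = 0).\<close>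
definition opt_subgrad :: "nat \<Rightarrow> (nat \<Rightarrow> real^('n::{finite,linorder}) \<Rightarrow> real) \<Rightarrow> (real^('n::{finite,linorder}) \<Rightarrow> real)
     \<Rightarrow> real^('n::{finite,linorder}) \<Rightarrow> nat \<Rightarrow> real^('n::{finite,linorder})" where
  "opt_subgrad N \<phi> J xr i =
     (SOME d. d \<in> DF N \<phi> J xr i \<and>
        (\<forall>e\<in>DF N \<phi> J xr i. grad J xr \<bullet> sgn d \<le> grad J xr \<bullet> sgn e))"

definition Fi :: "nat \<Rightarrow> (nat \<Rightarrow> real^('n::{finite,linorder}) \<Rightarrow> real) \<Rightarrow> (nat \<Rightarrow> (real^'n::{finite,linorder})^('n::{finite,linorder}))
     \<Rightarrow> (real^('n::{finite,linorder}) \<Rightarrow> real) \<Rightarrow> real^('n::{finite,linorder}) \<Rightarrow> nat \<Rightarrow> (real^('n::{finite,linorder})) set" where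
  "Fi N \<phi> H J xr i =
     (if concave_on UNIV (\<phi> i) then {x. \<phi> i x \<ge> 0}
      else if convex_on UNIV (\<phi> i) then
        {x. \<phi> i xr + opt_subgrad N \<phi> J xr i \<bullet> (x - xr) \<ge> 0}
      else {x. \<phi> i xr + opt_subgrad N \<phi> J xr i \<bullet> (x - xr)
               \<ge> (1/2) * ((x - xr) \<bullet> (H i *v (x - xr)))})"

definition Fset :: "nat \<Rightarrow> (nat \<Rightarrow> real^('n::{finite,linorder}) \<Rightarrow> real) \<Rightarrow> (nat \<Rightarrow> (real^'n::{finite,linorder})^('n::{finite,linorder}))
     \<Rightarrow> (real^('n::{finite,linorder}) \<Rightarrow> real) \<Rightarrow> real^('n::{finite,linorder}) \<Rightarrow> (real^('n::{finite,linorder})) set" where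
  "Fset N \<phi> H J xr = (\<Inter>i\<in>{1..N}. Fi N \<phi> H J xr i)"

end

theory Submission
  imports Defs
begin
lemma symB: fixes H :: "real^'n^'n" assumes "transpose H = H"
  shows "x \<bullet> (H *v y) = y \<bullet> (H *v x)"
proof -
  have "x \<bullet> (H *v y) = (x v* H) \<bullet> y" by (simp add: dot_lmul_matrix)
  also have "x v* H = transpose H *v x" by simp
  finally show ?thesis using assms by (simp add: inner_commute)
qed
lemma quad_id: fixes H :: "real^'n^'n" assumes "transpose H = H" and "u + v = 1"
  shows "(u *\<^sub>R a + v *\<^sub>R b) \<bullet> (H *v (u *\<^sub>R a + v *\<^sub>R b)) =
    u * (a \<bullet> (H *v a)) + v * (b \<bullet> (H *v b)) - u * v * ((a - b) \<bullet> (H *v (a - b)))"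
proof -
  have s: "b \<bullet> (H *v a) = a \<bullet> (H *v b)" using symB[OF assms(1)] by simp
  have v: "v = 1 - u" using assms(2) by simp
  show ?thesis unfolding v
    by (simp add: algebra_simps inner_add_left inner_add_right inner_diff_left inner_diff_right s power2_eq_square)
qed

lemma concave_superlevel: "concave_on UNIV f \<Longrightarrow> convex {x. (0::real) \<le> f x}"
proof -
  assume "concave_on UNIV f"
  hence h: "\<And>x y u v. u \<ge> 0 \<Longrightarrow> v \<ge> 0 \<Longrightarrow> u + v = 1 \<Longrightarrow> f (u *\<^sub>R x + v *\<^sub>R y) \<ge> u * f x + v * f y"
    unfolding concave_on_iff by blast
  show ?thesis unfolding convex_def
  proof (intro ballI allI impI)
    fix x y u v assume xy: "x \<in> {x. 0 \<le> f x}" "y \<in> {x. 0 \<le> f x}" and uv: "(0::real) \<le> u" "0 \<le> v" "u + v = 1"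
    have "0 \<le> u * f x + v * f y" using xy uv by simp
    also have "\<dots> \<le> f (u *\<^sub>R x + v *\<^sub>R y)" using h uv by blast
    finally show "u *\<^sub>R x + v *\<^sub>R y \<in> {x. 0 \<le> f x}" by simp
  qed
qed

lemma quad_concave: fixes H :: "real^'n^'n" assumes "psd H"
  shows "concave_on UNIV (\<lambda>x. a + d \<bullet> (x - c) - (1/2) * ((x - c) \<bullet> (H *v (x - c))))"
  unfolding concave_on_iff
proof (intro conjI ballI allI impI)
  fix x y :: "real^'n" and u v :: real
  assume u: "u \<ge> 0" "v \<ge> 0" "u + v = 1"
  have e: "u *\<^sub>R x + v *\<^sub>R y - c = u *\<^sub>R (x - c) + v *\<^sub>R (y - c)"
  proof -
    have "c = u *\<^sub>R c + v *\<^sub>R c" using u(3) by (metis scaleR_add_left scaleR_one)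
    thus ?thesis by (simp add: algebra_simps)
  qed
  have q: "(u *\<^sub>R x + v *\<^sub>R y - c) \<bullet> (H *v (u *\<^sub>R x + v *\<^sub>R y - c)) =
    u * ((x-c) \<bullet> (H *v (x-c))) + v * ((y-c) \<bullet> (H *v (y-c))) - u * v * ((x - y) \<bullet> (H *v (x - y)))"
    unfolding e using quad_id[of H u v "x - c" "y - c"] assms u by (simp add: psd_def)
  have nn: "0 \<le> u * v * ((x - y) \<bullet> (H *v (x - y)))"
    using assms u by (simp add: psd_def)
  have l: "d \<bullet> (u *\<^sub>R x + v *\<^sub>R y - c) = u * (d \<bullet> (x - c)) + v * (d \<bullet> (y - c))"
    unfolding e by (simp add: inner_add_right)
  have a: "a = u * a + v * a" using u(3) by (metis distrib_right mult_1)
  show "u * (a + d \<bullet> (x - c) - 1 / 2 * ((x - c) \<bullet> (H *v (x - c)))) +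
        v * (a + d \<bullet> (y - c) - 1 / 2 * ((y - c) \<bullet> (H *v (y - c))))
        \<le> a + d \<bullet> (u *\<^sub>R x + v *\<^sub>R y - c) - 1 / 2 * ((u *\<^sub>R x + v *\<^sub>R y - c) \<bullet> (H *v (u *\<^sub>R x + v *\<^sub>R y - c)))"
    unfolding q l using nn a by (simp add: algebra_simps)
qed simp

lemma grad_inner: assumes "J differentiable (at x)"
  shows "grad J x \<bullet> v = frechet_derivative J (at x) v"
proof -
  have lin: "linear (frechet_derivative J (at x))"
    using assms frechet_derivative_works has_derivative_linear by blast
  have ve: "v = (\<Sum>i\<in>UNIV. (v $ i) *\<^sub>R axis i 1)"
    using basis_expansion[of v] by (simp add: scalar_mult_eq_scaleR)
  have "frechet_derivative J (at x) v = frechet_derivative J (at x) (\<Sum>i\<in>UNIV. (v $ i) *\<^sub>R axis i 1)"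
    using ve by (rule arg_cong)
  also have "\<dots> = (\<Sum>i\<in>UNIV. (v $ i) * frechet_derivative J (at x) (axis i 1))"
    by (simp add: linear_sum[OF lin] linear_scale[OF lin])
  finally have "frechet_derivative J (at x) v = (\<Sum>i\<in>UNIV. (v $ i) * frechet_derivative J (at x) (axis i 1))" .
  thus ?thesis unfolding grad_def inner_vec_def by (simp add: mult.commute)
qed
theorem lemma4p4:
  fixes J :: "real^('n::{finite,linorder}) \<Rightarrow> real"
    and \<Gamma> :: "(real^('n::{finite,linorder})) set"
    and N :: nat
    and \<phi> :: "nat \<Rightarrow> real^('n::{finite,linorder}) \<Rightarrow> real"
    and H :: "nat \<Rightarrow> (real^'n::{finite,linorder})^('n::{finite,linorder})"
    and xk xk1 :: "real^('n::{finite,linorder})"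
  assumes J_smooth: "smooth_fun J"
    and J_strict: "strict_convex_on UNIV J"
    and J_pos: "\<forall>x. J x \<ge> 0"
    and G_conn: "connected \<Gamma>"
    and G_closed: "closed \<Gamma>"
    and G_polytope: "\<forall>x\<in>\<Gamma>. \<exists>P. polytope P \<and> aff_dim P = int CARD('n) \<and> x \<in> P \<and> P \<subseteq> \<Gamma>"
    and G_decomp: "\<Gamma> = (\<Inter>i\<in>{1..N}. {x. \<phi> i x \<ge> 0})"
    and phi_cont: "\<forall>i\<in>{1..N}. continuous_on UNIV (\<phi> i)"
    and phi_semi: "\<forall>i\<in>{1..N}. semi_convex_with (\<phi> i) (H i)"
    and A1: "\<forall>i\<in>{1..N}. \<forall>x. subdiff (\<phi> i) x \<noteq> {0}"
    and A2: "\<forall>i\<in>{1..N}. \<forall>x. \<phi> i x = 0 \<longrightarrow> 0 \<notin> subdiff (\<phi> i) x"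
    and A3: "\<forall>x. {i\<in>{1..N}. \<phi> i x = 0} \<noteq> {} \<longrightarrow>
               (\<exists>v. \<forall>i\<in>{i\<in>{1..N}. \<phi> i x = 0}. dirderiv (\<phi> i) x v < 0)"
    and xk_in: "xk \<in> \<Gamma>"
    and xk1_min: "xk1 \<in> Fset N \<phi> H J xk \<and> (\<forall>x\<in>Fset N \<phi> H J xk. J xk1 \<le> J x)"
  shows "grad J xk1 \<bullet> (xk - xk1) \<ge> 0 \<and> (J xk1 = J xk \<longrightarrow> xk1 = xk)"
proof -
  have diff: "\<And>x. J differentiable (at x)" using J_smooth by (cases rule: smooth_fun.cases) auto
  define F where "F = Fset N \<phi> H J xk"
  have Fi_conv: "convex (Fi N \<phi> H J xk i)" if i: "i \<in> {1..N}" for i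
  proof -
    define d where "d = opt_subgrad N \<phi> J xk i"
    have psd: "psd (H i)" using phi_semi i by (simp add: semi_convex_with_def)
    show ?thesis
    proof (cases "concave_on UNIV (\<phi> i)")
      case True thus ?thesis unfolding Fi_def using concave_superlevel by simp
    next
      case nc: False
      show ?thesis
      proof (cases "convex_on UNIV (\<phi> i)")
        case True
        have "{x. \<phi> i xk + d \<bullet> (x - xk) \<ge> 0} = {x. d \<bullet> x \<ge> d \<bullet> xk - \<phi> i xk}"
          by (auto simp: inner_diff_right)
        thus ?thesis using nc True convex_halfspace_ge unfolding Fi_def d_def by simp
      next
        case False
        have "{x. \<phi> i xk + d \<bullet> (x - xk) \<ge> (1/2) * ((x - xk) \<bullet> (H i *v (x - xk)))}
           = {x. 0 \<le> \<phi> i xk + d \<bullet> (x - xk) - (1/2) * ((x - xk) \<bullet> (H i *v (x - xk)))}"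
          by auto
        moreover have "convex \<dots>" by (rule concave_superlevel[OF quad_concave[OF psd]])
        ultimately show ?thesis using nc False unfolding Fi_def d_def by simp
      qed
    qed
  qed
  have convF: "convex F" unfolding F_def Fset_def using Fi_conv by (auto intro: convex_INT)
  have xkF: "xk \<in> F"
  proof -
    have "xk \<in> Fi N \<phi> H J xk i" if i: "i \<in> {1..N}" for i
    proof -
      have "\<phi> i xk \<ge> 0" using xk_in i G_decomp by auto
      thus ?thesis unfolding Fi_def by auto
    qed
    thus ?thesis unfolding F_def Fset_def by auto
  qed
  have xk1F: "xk1 \<in> F" and minF: "\<And>x. x \<in> F \<Longrightarrow> J xk1 \<le> J x" using xk1_min F_def by auto
  define w where "w = xk - xk1"
  have seg: "J xk1 \<le> J (xk1 + t *\<^sub>R w)" if t: "0 \<le> t" "t \<le> 1" for t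
  proof -
    have "(1 - t) *\<^sub>R xk1 + t *\<^sub>R xk \<in> F"
      using convF xk1F xkF t unfolding convex_def by auto
    moreover have "(1 - t) *\<^sub>R xk1 + t *\<^sub>R xk = xk1 + t *\<^sub>R w"
      unfolding w_def by (simp add: algebra_simps)
    ultimately show ?thesis using minF by simp
  qed
  define D where "D = frechet_derivative J (at xk1)"
  have JD: "(J has_derivative D) (at xk1)" unfolding D_def using diff frechet_derivative_works by blast
  have linD: "linear D" using JD has_derivative_linear by blast
  have line: "((\<lambda>t::real. xk1 + t *\<^sub>R w) has_derivative (\<lambda>t. t *\<^sub>R w)) (at 0)"
    by (auto intro!: derivative_eq_intros)
  have comp: "((\<lambda>t. J (xk1 + t *\<^sub>R w)) has_derivative (\<lambda>t. D (t *\<^sub>R w))) (at 0)"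
    using has_derivative_compose[OF line, of J D] JD by simp
  have eqf: "(\<lambda>t. D (t *\<^sub>R w)) = (\<lambda>t. D w * t)"
    using linear_scale[OF linD] by (auto simp: mult.commute)
  have der: "((\<lambda>t. J (xk1 + t *\<^sub>R w)) has_real_derivative D w) (at 0)"
  proof -
    have "(*) (D w) = (\<lambda>t. D (t *\<^sub>R w))" using eqf by (simp add: fun_eq_iff)
    thus ?thesis unfolding has_field_derivative_def using comp by metis
  qed
  have part1: "grad J xk1 \<bullet> w \<ge> 0"
  proof (rule ccontr)
    assume "\<not> ?thesis"
    hence neg: "D w < 0" using grad_inner[OF diff] D_def by simp
    obtain d where d: "d > 0" "\<And>h. h > 0 \<Longrightarrow> h < d \<Longrightarrow> J (xk1 + (0 + h) *\<^sub>R w) < J (xk1 + 0 *\<^sub>R w)"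
      using DERIV_neg_dec_right[OF der neg] by blast
    define h where "h = min (d/2) 1"
    have "J (xk1 + h *\<^sub>R w) < J xk1" using d(2)[of h] d(1) unfolding h_def by simp
    moreover have "J xk1 \<le> J (xk1 + h *\<^sub>R w)" using seg[of h] d(1) unfolding h_def by simp
    ultimately show False by simp
  qed
  have part2: "xk1 = xk" if eq: "J xk1 = J xk"
  proof (rule ccontr)
    assume ne: "xk1 \<noteq> xk"
    have "J ((1 - 1/2) *\<^sub>R xk1 + (1/2) *\<^sub>R xk) < (1 - 1/2) * J xk1 + (1/2) * J xk"
    proof -
      have "\<forall>u. 0 < u \<and> u < 1 \<longrightarrow> J ((1 - u) *\<^sub>R xk1 + u *\<^sub>R xk) < (1 - u) * J xk1 + u * J xk"
        using J_strict ne unfolding strict_convex_on_def by blast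
      moreover have "0 < (1/2::real) \<and> (1/2::real) < 1" by simp
      ultimately show ?thesis by blast
    qed
    moreover have "(1 - 1/2) *\<^sub>R xk1 + (1/2) *\<^sub>R xk \<in> F"
      using convF xk1F xkF unfolding convex_def by auto
    ultimately show False using minF eq by fastforce
  qed
  show ?thesis using part1 part2 unfolding w_def by blast
qed

end
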